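(* For any fixed $m$, any fixed $k<m$ and any fixed $\vec p\in(0,1)^m$, $$\Pr_{P\sim(\pi_{\vec p})^n}\big(\mathrm{top}_k(\vec p)\subseteq\mathrm{CORE}(P)\big)=1-\exp(-\Omega(n)).$$
   Context: $\mathcal A=[m]$, $\mathcal A_k$ the $k$-subsets. Approval profile $P=(A_1,\dots,A_n)$, $A_j\subseteq\mathcal A$, drawn i.i.d. from $\pi_{\vec p}$, where $\Pr_{\pi_{\vec p}}(A)=\prod_{i\in A}p_i\prod_{i\notin A}(1-p_i)$. $\mathrm{top}_k(\vec p)$ is the set of $W\in\mathcal A_k$ with $p_i\ge p_j$ for all $i\in W$, $j\notin W$. $W\in\mathcal A_k$ is in $\mathrm{CORE}(P)$ iff for every nonempty set of voters $N'\subseteq[n]$ and every $W'\subseteq\mathcal A$ with $|W'|/k\le|N'|/n$ there is $j\in N'$ with $|A_j\cap W'|\le|A_j\cap W|$. Asymptotics as $n\to\infty$. *)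

theory Defs
  imports "HOL-Probability.Probability"
begin

text \<open>Alternatives are 0..<m, voters are 0..<n. An approval profile is a map
  from voters to approval sets.\<close>

definition approval_pmf :: "nat \<Rightarrow> (nat \<Rightarrow> real) \<Rightarrow> nat set pmf" where
  "approval_pmf m p =
     map_pmf (\<lambda>f. {i \<in> {..<m}. f i}) (Pi_pmf {..<m} False (\<lambda>i. bernoulli_pmf (p i)))"

definition profile_pmf :: "nat \<Rightarrow> nat \<Rightarrow> (nat \<Rightarrow> real) \<Rightarrow> (nat \<Rightarrow> nat set) pmf" where
  "profile_pmf n m p = Pi_pmf {..<n} {} (\<lambda>_. approval_pmf m p)"

definition top_k :: "nat \<Rightarrow> nat \<Rightarrow> (nat \<Rightarrow> real) \<Rightarrow> nat set set" where
  "top_k m k p = {W. W \<subseteq> {..<m} \<and> card W = k \<and>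
                   (\<forall>i\<in>W. \<forall>j\<in>{..<m} - W. p i \<ge> p j)}"

definition in_core :: "nat \<Rightarrow> nat \<Rightarrow> nat \<Rightarrow> (nat \<Rightarrow> nat set) \<Rightarrow> nat set \<Rightarrow> bool" where
  "in_core m k n P W \<longleftrightarrow> W \<subseteq> {..<m} \<and> card W = k \<and>
     (\<forall>N'. N' \<subseteq> {..<n} \<longrightarrow> N' \<noteq> {} \<longrightarrow>
       (\<forall>W'. W' \<subseteq> {..<m} \<longrightarrow> real (card W') / real k \<le> real (card N') / real n \<longrightarrow>
          (\<exists>j\<in>N'. card (P j \<inter> W') \<le> card (P j \<inter> W))))"

end

theory Submission
  imports Defs
begin


definition Bp :: "(nat \<Rightarrow> real) \<Rightarrow> nat set \<Rightarrow> (nat \<Rightarrow> bool) pmf" where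
  "Bp p S = Pi_pmf S False (\<lambda>i. bernoulli_pmf (p i))"

definition cnt :: "nat set \<Rightarrow> (nat \<Rightarrow> bool) \<Rightarrow> nat" where
  "cnt S f = card {i\<in>S. f i}"

lemma prob_pair_product:
  "measure_pmf.prob (pair_pmf M N) (A \<times> B) = measure_pmf.prob M A * measure_pmf.prob N B"
proof -
  have "measure_pmf.prob (pair_pmf M N) (A \<times> B) =
        measure_pmf.prob (pair_pmf M N) ((A \<times> B) \<inter> set_pmf (pair_pmf M N))"
    by (rule measure_Int_set_pmf[symmetric])
  also have "(A \<times> B) \<inter> set_pmf (pair_pmf M N) = (A \<inter> set_pmf M) \<times> (B \<inter> set_pmf N)"
    by auto
  also have "measure_pmf.prob (pair_pmf M N) \<dots> =
      measure_pmf.prob M (A \<inter> set_pmf M) * measure_pmf.prob N (B \<inter> set_pmf N)"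
    by (rule measure_pmf_prob_product) auto
  finally show ?thesis by (simp add: measure_Int_set_pmf)
qed

definition merge :: "nat set \<Rightarrow> (nat \<Rightarrow> bool) \<Rightarrow> (nat \<Rightarrow> bool) \<Rightarrow> nat \<Rightarrow> bool" where
  "merge S f g = (\<lambda>x. if x \<in> S then f x else g x)"

lemma prob_B_union:
  assumes "finite S" "finite T" "S \<inter> T = {}"
    and "\<And>f g. Q1 (merge S f g) = Q1 f"
    and "\<And>f g. Q2 (merge S f g) = Q2 g"
  shows "measure_pmf.prob (Bp p (S \<union> T)) {f. Q1 f \<and> Q2 f} =
         measure_pmf.prob (Bp p S) {f. Q1 f} * measure_pmf.prob (Bp p T) {g. Q2 g}"
proof -
  have "measure_pmf.prob (Bp p (S \<union> T)) {f. Q1 f \<and> Q2 f} =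
     measure_pmf.prob (pair_pmf (Bp p S) (Bp p T))
       ((\<lambda>(f,g) x. if x \<in> S then f x else g x) -` {f. Q1 f \<and> Q2 f})"
    unfolding Bp_def using assms by (subst Pi_pmf_union) auto
  also have "(\<lambda>(f,g) x. if x \<in> S then f x else g x) -` {f. Q1 f \<and> Q2 f} = {f. Q1 f} \<times> {g. Q2 g}"
  proof (rule set_eqI)
    fix z :: "(nat \<Rightarrow> bool) \<times> (nat \<Rightarrow> bool)"
    obtain f g where z: "z = (f,g)" by (cases z)
    show "z \<in> (\<lambda>(f,g) x. if x \<in> S then f x else g x) -` {f. Q1 f \<and> Q2 f} \<longleftrightarrow> z \<in> {f. Q1 f} \<times> {g. Q2 g}"
      unfolding z vimage_def using assms(4)[of f g] assms(5)[of f g] by (simp add: merge_def)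
  qed
  finally show ?thesis by (simp add: prob_pair_product)
qed

lemma prob_B_subset:
  assumes "finite S" "S' \<subseteq> S"
    and "\<And>f. Q (merge S' f (\<lambda>_. False)) = Q f"
  shows "measure_pmf.prob (Bp p S) {f. Q f} = measure_pmf.prob (Bp p S') {f. Q f}"
proof -
  have "measure_pmf.prob (Bp p S') {f. Q f} =
     measure_pmf.prob (Bp p S) ((\<lambda>f x. if x \<in> S' then f x else False) -` {f. Q f})"
    unfolding Bp_def using assms by (subst Pi_pmf_subset[of S]) auto
  also have "(\<lambda>f x. if x \<in> S' then f x else False) -` {f. Q f} = {f. Q f}"
    using assms(3) by (auto simp: merge_def)
  finally show ?thesis by simp
qed

lemma cnt_merge1: "T \<subseteq> S \<Longrightarrow> cnt T (merge S f g) = cnt T f"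
proof -
  assume "T \<subseteq> S"
  hence "{i\<in>T. merge S f g i} = {i\<in>T. f i}" by (auto simp: merge_def)
  thus ?thesis by (simp add: cnt_def)
qed

lemma cnt_merge2: "T \<inter> S = {} \<Longrightarrow> cnt T (merge S f g) = cnt T g"
proof -
  assume "T \<inter> S = {}"
  hence "{i\<in>T. merge S f g i} = {i\<in>T. g i}" by (auto simp: merge_def)
  thus ?thesis by (simp add: cnt_def)
qed

lemma cnt_insert_upd:
  assumes "x \<notin> S" "finite S"
  shows "cnt (insert x S) (f(x := y)) = (if y then 1 else 0) + cnt S f"
proof -
  have "{i\<in>insert x S. (f(x := y)) i} = (if y then {x} else {}) \<union> {i\<in>S. f i}"
    using assms by auto
  thus ?thesis unfolding cnt_def using assms by (auto simp: card_insert_if)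
qed

lemma prob_B_insert:
  assumes "finite S" "x \<notin> S" "0 \<le> p x" "p x \<le> 1"
  shows "measure_pmf.prob (Bp p (insert x S)) {f. cnt (insert x S) f < u} =
    p x * measure_pmf.prob (Bp p S) {f. cnt S f < u - 1} +
    (1 - p x) * measure_pmf.prob (Bp p S) {f. cnt S f < u}"
proof -
  let ?M = "pair_pmf (bernoulli_pmf (p x)) (Bp p S)"
  have "measure_pmf.prob (Bp p (insert x S)) {f. cnt (insert x S) f < u} =
     measure_pmf.prob ?M ((\<lambda>(y,f). f(x:=y)) -` {f. cnt (insert x S) f < u})"
    unfolding Bp_def using assms by (subst Pi_pmf_insert) auto
  also have "(\<lambda>(y,f). f(x:=y)) -` {f. cnt (insert x S) f < u} =
     ({True} \<times> {f. cnt S f < u - 1}) \<union> ({False} \<times> {f. cnt S f < u})"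
    using assms by (auto simp: cnt_insert_upd)
  also have "measure_pmf.prob ?M \<dots> = measure_pmf.prob ?M ({True} \<times> {f. cnt S f < u - 1})
      + measure_pmf.prob ?M ({False} \<times> {f. cnt S f < u})"
    by (rule measure_pmf.finite_measure_Union) auto
  also have "\<dots> = p x * measure_pmf.prob (Bp p S) {f. cnt S f < u - 1} +
    (1 - p x) * measure_pmf.prob (Bp p S) {f. cnt S f < u}"
    using assms by (simp add: prob_pair_product measure_pmf_single)
  finally show ?thesis .
qed


lemma prob_cnt_mono:
  "measure_pmf.prob (Bp p S) {f. cnt S f < u - 1} \<le> measure_pmf.prob (Bp p S) {f. cnt S f < u}"
  by (rule measure_pmf.finite_measure_mono) auto

lemma domination:
  assumes "finite X" "inj_on g X"
    and "\<And>x. x \<in> X \<Longrightarrow> 0 \<le> p x \<and> p x \<le> p (g x) \<and> p (g x) \<le> 1"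
  shows "measure_pmf.prob (Bp p (g ` X)) {f. cnt (g ` X) f < u} \<le>
         measure_pmf.prob (Bp p X) {f. cnt X f < u}"
  using assms
proof (induction X arbitrary: u rule: finite_induct)
  case empty
  then show ?case by simp
next
  case (insert x X)
  have gx: "g x \<notin> g ` X" using insert by auto
  have inj: "inj_on g X" using insert.prems by (auto intro: inj_on_subset)
  have px: "0 \<le> p x" "p x \<le> p (g x)" "p (g x) \<le> 1" using insert.prems by auto
  define a where "a = measure_pmf.prob (Bp p X) {f. cnt X f < u - 1}"
  define b where "b = measure_pmf.prob (Bp p X) {f. cnt X f < u}"
  define a' where "a' = measure_pmf.prob (Bp p (g ` X)) {f. cnt (g ` X) f < u - 1}"
  define b' where "b' = measure_pmf.prob (Bp p (g ` X)) {f. cnt (g ` X) f < u}"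
  have "a' \<le> a" "b' \<le> b" unfolding a_def a'_def b_def b'_def
    using insert.IH[OF inj] insert.prems by auto
  have "a \<le> b" unfolding a_def b_def by (rule prob_cnt_mono)
  have "measure_pmf.prob (Bp p (g ` insert x X)) {f. cnt (g ` insert x X) f < u}
      = p (g x) * a' + (1 - p (g x)) * b'"
    unfolding a'_def b'_def using gx px insert.hyps by (simp add: prob_B_insert)
  also have "\<dots> \<le> p (g x) * a + (1 - p (g x)) * b"
    using \<open>a' \<le> a\<close> \<open>b' \<le> b\<close> px by (intro add_mono mult_left_mono) auto
  also have "\<dots> \<le> p x * a + (1 - p x) * b"
  proof -
    have "(p (g x) - p x) * (a - b) \<le> 0"
      using px \<open>a \<le> b\<close> by (intro mult_nonneg_nonpos) auto
    thus ?thesis by (simp add: algebra_simps)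
  qed
  also have "\<dots> = measure_pmf.prob (Bp p (insert x X)) {f. cnt (insert x X) f < u}"
    unfolding a_def b_def using px insert.hyps px by (simp add: prob_B_insert)
  finally show ?case .
qed

lemma blocks:
  assumes "\<And>i. i < r \<Longrightarrow> finite (Z i)"
    and "\<And>i j. i < r \<Longrightarrow> j < r \<Longrightarrow> i \<noteq> j \<Longrightarrow> Z i \<inter> Z j = {}"
    and "\<And>i. i < r \<Longrightarrow> measure_pmf.prob (Bp p (Z i)) {f. cnt (Z i) f < u} \<le> G"
    and "0 \<le> G"
  shows "measure_pmf.prob (Bp p (\<Union>i<r. Z i)) {f. \<forall>i<r. cnt (Z i) f < u} \<le> G ^ r"
  using assms
proof (induction r)
  case 0
  then show ?case by simp
next
  case (Suc r)
  let ?S = "\<Union>i<r. Z i"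
  have IH: "measure_pmf.prob (Bp p ?S) {f. \<forall>i<r. cnt (Z i) f < u} \<le> G ^ r"
    using Suc.prems by (intro Suc.IH) auto
  have disj: "?S \<inter> Z r = {}"
  proof -
    { fix i x assume "i < r" "x \<in> Z i" "x \<in> Z r"
      then have False using Suc.prems(2)[of i r] by auto }
    thus ?thesis by blast
  qed
  have eq: "(\<Union>i<Suc r. Z i) = ?S \<union> Z r" by (auto simp: lessThan_Suc)
  have eq2: "{f. \<forall>i<Suc r. cnt (Z i) f < u} = {f. (\<forall>i<r. cnt (Z i) f < u) \<and> cnt (Z r) f < u}"
    by (auto simp: less_Suc_eq)
  have m1: "cnt (Z i) (merge ?S f g) = cnt (Z i) f" if "i < r" for i f g
  proof -
    have "{x \<in> Z i. merge ?S f g x} = {x \<in> Z i. f x}" using that by (auto simp: merge_def)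
    thus ?thesis unfolding cnt_def by simp
  qed
  have m2: "cnt (Z r) (merge ?S f g) = cnt (Z r) g" for f g
  proof -
    have "{x \<in> Z r. merge ?S f g x} = {x \<in> Z r. g x}" using disj by (auto simp: merge_def)
    thus ?thesis unfolding cnt_def by simp
  qed
  have "measure_pmf.prob (Bp p (\<Union>i<Suc r. Z i)) {f. \<forall>i<Suc r. cnt (Z i) f < u} =
     measure_pmf.prob (Bp p ?S) {f. \<forall>i<r. cnt (Z i) f < u} *
     measure_pmf.prob (Bp p (Z r)) {f. cnt (Z r) f < u}"
    unfolding eq eq2 using Suc.prems disj
    by (intro prob_B_union) (auto simp add: m1 m2)
  also have "\<dots> \<le> G ^ r * G"
    using IH Suc.prems(3)[of r] Suc.prems(4) by (intro mult_mono) auto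
  finally show ?case by (simp add: mult.commute)
qed

lemma power_diff_ge:
  fixes a b :: real
  assumes "0 \<le> a" "a \<le> b"
  shows "real (Suc r) * (b - a) * a ^ r \<le> b ^ Suc r - a ^ Suc r"
proof -
  have "b ^ Suc r - a ^ Suc r = (b - a) * (\<Sum>i<Suc r. a ^ (Suc r - Suc i) * b ^ i)"
    by (rule power_diff_sumr2)
  also have "(\<Sum>i<Suc r. a ^ (Suc r - Suc i) * b ^ i) \<ge> (\<Sum>i<Suc r. a ^ r)"
  proof (rule sum_mono)
    fix i assume "i \<in> {..<Suc r}"
    hence "a ^ r = a ^ i * a ^ (r - i)" by (simp add: power_add[symmetric])
    also have "\<dots> \<le> a ^ (Suc r - Suc i) * b ^ i"
    proof -
      have "a ^ i * a ^ (r - i) \<le> b ^ i * a ^ (r - i)"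
        using assms by (intro mult_right_mono power_mono) auto
      thus ?thesis by (simp add: mult.commute)
    qed
    finally show "a ^ r \<le> a ^ (Suc r - Suc i) * b ^ i" .
  qed
  hence "(b - a) * (\<Sum>i<Suc r. a ^ (Suc r - Suc i) * b ^ i) \<ge> (b - a) * (\<Sum>i<Suc r. a ^ r)"
    using assms by (intro mult_left_mono) auto
  finally show ?thesis by (simp add: mult_ac)
qed

lemma telescope:
  fixes G :: "nat \<Rightarrow> real"
  assumes "\<And>u. 0 \<le> G u" "\<And>u. G u \<le> G (Suc u)" "\<And>u. G u \<le> 1"
  shows "(\<Sum>u<N. (G (Suc u) - G u) * G u ^ r) \<le> 1 / real (Suc r)"
proof -
  have "real (Suc r) * (\<Sum>u<N. (G (Suc u) - G u) * G u ^ r) \<le> G N ^ Suc r - G 0 ^ Suc r"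
  proof (induction N)
    case 0 then show ?case by simp
  next
    case (Suc N)
    have "real (Suc r) * (G (Suc N) - G N) * G N ^ r \<le> G (Suc N) ^ Suc r - G N ^ Suc r"
      using assms by (intro power_diff_ge) auto
    with Suc show ?case by (simp add: distrib_left algebra_simps)
  qed
  also have "\<dots> \<le> 1" using assms
    by (smt (verit, ccfv_SIG) power_le_one zero_le_power)
  finally show ?thesis by (simp add: field_simps mult.commute)
qed


lemma key:
  assumes "finite S" "X \<union> Y \<subseteq> S" "X \<inter> Y = {}"
    and "1 \<le> card X" "card X \<le> card Y"
    and "\<And>x y. x \<in> X \<Longrightarrow> y \<in> Y \<Longrightarrow> p x \<le> p y"
    and "\<And>i. i \<in> S \<Longrightarrow> 0 \<le> p i \<and> p i \<le> 1"
  shows "measure_pmf.prob (Bp p S) {f. cnt Y f < cnt X f} \<le> 1 / real (Suc (card Y div card X))"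
proof -
  define s where "s = card X"
  define t where "t = card Y"
  define r where "r = t div s"
  have finX: "finite X" and finY: "finite Y" using assms(1,2) finite_subset by auto
  have "s * r \<le> t" unfolding r_def by simp
  hence "card (X \<times> {..<r}) \<le> card Y" by (simp add: card_cartesian_product s_def t_def)
  then obtain h where h: "h ` (X \<times> {..<r}) \<subseteq> Y" "inj_on h (X \<times> {..<r})"
    using card_le_inj[of "X \<times> {..<r}" Y] finX finY by auto
  define Z where "Z i = (\<lambda>x. h (x,i)) ` X" for i
  define R where "R = (\<Union>i<r. Z i)"
  have ZY: "Z i \<subseteq> Y" if "i < r" for i using h(1) that unfolding Z_def by auto
  have RY: "R \<subseteq> Y" using ZY unfolding R_def by auto
  have finZ: "finite (Z i)" for i unfolding Z_def using finX by simp
  have finR: "finite R" unfolding R_def using finZ by simp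
  have injZ: "inj_on (\<lambda>x. h (x,i)) X" if "i < r" for i
    using h(2) that unfolding inj_on_def by auto
  have disjZ: "Z i \<inter> Z j = {}" if "i < r" "j < r" "i \<noteq> j" for i j
    using h(2) that unfolding Z_def inj_on_def by fastforce
  define G where "G u = measure_pmf.prob (Bp p X) {f. cnt X f < u}" for u
  have G0: "0 \<le> G u" for u unfolding G_def by simp
  have G1: "G u \<le> 1" for u unfolding G_def by simp
  have Gmono: "G u \<le> G (Suc u)" for u unfolding G_def
    by (rule measure_pmf.finite_measure_mono) auto
  have dom: "measure_pmf.prob (Bp p (Z i)) {f. cnt (Z i) f < u} \<le> G u" if "i < r" for i u
  proof -
    have "measure_pmf.prob (Bp p ((\<lambda>x. h (x,i)) ` X)) {f. cnt ((\<lambda>x. h (x,i)) ` X) f < u}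
       \<le> measure_pmf.prob (Bp p X) {f. cnt X f < u}"
    proof (rule domination[OF finX injZ[OF that]])
      fix x assume x: "x \<in> X"
      have hx: "h (x,i) \<in> Y" using h(1) x that by auto
      show "0 \<le> p x \<and> p x \<le> p (h (x,i)) \<and> p (h (x,i)) \<le> 1"
        using assms(6)[OF x hx] assms(7)[of x] assms(7)[of "h (x,i)"] assms(2) x hx by auto
    qed
    thus ?thesis unfolding Z_def G_def .
  qed
  have H: "measure_pmf.prob (Bp p R) {f. \<forall>i<r. cnt (Z i) f < u} \<le> G u ^ r" for u
    unfolding R_def by (rule blocks) (use finZ disjZ dom G0 in auto)
  have step1: "measure_pmf.prob (Bp p S) {f. cnt Y f < cnt X f} \<le>
      measure_pmf.prob (Bp p S) {f. \<forall>i<r. cnt (Z i) f < cnt X f}"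
  proof (rule measure_pmf.finite_measure_mono)
    show "{f. cnt Y f < cnt X f} \<subseteq> {f. \<forall>i<r. cnt (Z i) f < cnt X f}"
    proof clarify
      fix f i assume "cnt Y f < cnt X f" "i < r"
      have "cnt (Z i) f \<le> cnt Y f" unfolding cnt_def
        using ZY[OF \<open>i < r\<close>] finY by (intro card_mono) auto
      thus "cnt (Z i) f < cnt X f" using \<open>cnt Y f < cnt X f\<close> by simp
    qed
  qed simp
  have XR: "X \<union> R \<subseteq> S" using RY assms(2) by auto
  have step2: "measure_pmf.prob (Bp p S) {f. \<forall>i<r. cnt (Z i) f < cnt X f} =
      measure_pmf.prob (Bp p (X \<union> R)) {f. \<forall>i<r. cnt (Z i) f < cnt X f}"
  proof (rule prob_B_subset[OF assms(1) XR])
    fix f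
    have "Z i \<subseteq> X \<union> R" if "i < r" for i using that unfolding R_def by auto
    thus "(\<forall>i<r. cnt (Z i) (merge (X \<union> R) f (\<lambda>_. False)) < cnt X (merge (X \<union> R) f (\<lambda>_. False)))
       = (\<forall>i<r. cnt (Z i) f < cnt X f)"
      by (simp add: cnt_merge1)
  qed
  define A where "A u = {f. cnt X f = u \<and> (\<forall>i<r. cnt (Z i) f < u)}" for u
  have cntX: "cnt X f \<le> s" for f unfolding cnt_def s_def using finX by (intro card_mono) auto
  have "{f. \<forall>i<r. cnt (Z i) f < cnt X f} = (\<Union>u\<in>{..s}. A u)"
    unfolding A_def using cntX by auto
  hence step3: "measure_pmf.prob (Bp p (X \<union> R)) {f. \<forall>i<r. cnt (Z i) f < cnt X f} \<le>
      (\<Sum>u\<in>{..s}. measure_pmf.prob (Bp p (X \<union> R)) (A u))"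
    by (simp add: measure_pmf.finite_measure_subadditive_finite)
  have XRd: "X \<inter> R = {}" using RY assms(3) by auto
  have step4: "measure_pmf.prob (Bp p (X \<union> R)) (A u) =
      measure_pmf.prob (Bp p X) {f. cnt X f = u} * measure_pmf.prob (Bp p R) {f. \<forall>i<r. cnt (Z i) f < u}" for u
  proof -
    have "measure_pmf.prob (Bp p (X \<union> R)) {f. cnt X f = u \<and> (\<forall>i<r. cnt (Z i) f < u)} =
      measure_pmf.prob (Bp p X) {f. cnt X f = u} * measure_pmf.prob (Bp p R) {f. \<forall>i<r. cnt (Z i) f < u}"
    proof (rule prob_B_union[OF finX finR XRd])
      show "(cnt X (merge X f g) = u) = (cnt X f = u)" for f g by (simp add: cnt_merge1)
      have "Z i \<inter> X = {}" if "i < r" for i using that XRd unfolding R_def by auto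
      thus "(\<forall>i<r. cnt (Z i) (merge X f g) < u) = (\<forall>i<r. cnt (Z i) g < u)" for f g
        by (simp add: cnt_merge2)
    qed
    thus ?thesis unfolding A_def .
  qed
  have step5: "measure_pmf.prob (Bp p X) {f. cnt X f = u} = G (Suc u) - G u" for u
  proof -
    have "{f. cnt X f < Suc u} = {f. cnt X f < u} \<union> {f. cnt X f = u}" by auto
    hence "G (Suc u) = G u + measure_pmf.prob (Bp p X) {f. cnt X f = u}"
      unfolding G_def by (simp add: measure_pmf.finite_measure_Union disjoint_iff)
    thus ?thesis by simp
  qed
  have "measure_pmf.prob (Bp p S) {f. cnt Y f < cnt X f} \<le>
      (\<Sum>u\<in>{..s}. (G (Suc u) - G u) * measure_pmf.prob (Bp p R) {f. \<forall>i<r. cnt (Z i) f < u})"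
    using step1 step2 step3 step4 step5 by simp
  also have "\<dots> \<le> (\<Sum>u<Suc s. (G (Suc u) - G u) * G u ^ r)"
    unfolding lessThan_Suc_atMost using Gmono H by (intro sum_mono mult_left_mono) auto
  also have "\<dots> \<le> 1 / real (Suc r)"
    by (rule telescope) (use G0 G1 Gmono in auto)
  finally show ?thesis unfolding r_def s_def t_def .
qed


lemma approval_prob:
  assumes "W \<subseteq> {..<m}" "W' \<subseteq> {..<m}"
  shows "measure_pmf.prob (approval_pmf m p) {A. card (A \<inter> W) < card (A \<inter> W')} =
         measure_pmf.prob (Bp p {..<m}) {f. cnt W f < cnt W' f}"
proof -
  have "(\<lambda>f. {i \<in> {..<m}. f i}) -` {A. card (A \<inter> W) < card (A \<inter> W')} = {f. cnt W f < cnt W' f}"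
  proof -
    have e: "{i \<in> {..<m}. f i} \<inter> V = {i\<in>V. f i}" if "V \<subseteq> {..<m}" for V and f :: "nat \<Rightarrow> bool"
      using that by auto
    show ?thesis unfolding cnt_def using e[OF assms(1)] e[OF assms(2)] by auto
  qed
  thus ?thesis unfolding approval_pmf_def Bp_def by simp
qed

lemma cnt_split:
  assumes "finite V" "C \<subseteq> V"
  shows "cnt V f = cnt C f + cnt (V - C) f"
proof -
  have "{i\<in>V. f i} = {i\<in>C. f i} \<union> {i\<in>V - C. f i}" using assms by auto
  moreover have "finite {i\<in>C. f i}" "finite {i\<in>V - C. f i}"
    using assms by (auto intro: finite_subset[of _ V])
  ultimately show ?thesis unfolding cnt_def by (simp add: card_Un_disjoint disjoint_iff)
qed

lemma top_gap:
  assumes k: "0 < k" and W: "W \<in> top_k m k p" and W': "W' \<subseteq> {..<m}" "W' \<noteq> {}" "card W' \<le> k"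
    and p: "\<And>i. i < m \<Longrightarrow> 0 < p i \<and> p i < 1"
  shows "measure_pmf.prob (approval_pmf m p) {A. card (A \<inter> W) < card (A \<inter> W')}
         < real (card W') / real k"
proof -
  have Wm: "W \<subseteq> {..<m}" and cW: "card W = k"
    and top: "\<And>i j. i \<in> W \<Longrightarrow> j \<in> {..<m} - W \<Longrightarrow> p j \<le> p i"
    using W unfolding top_k_def by auto
  define C where "C = W \<inter> W'"
  define X where "X = W' - W"
  define Y where "Y = W - W'"
  have finW: "finite W" "finite W'" using Wm W' finite_subset by auto
  have eqW': "cnt W' f = cnt C f + cnt X f" for f
  proof -
    have "W' - C = X" unfolding C_def X_def by auto
    thus ?thesis using cnt_split[of W' C f] finW unfolding C_def by simp
  qed
  have eqW: "cnt W f = cnt C f + cnt Y f" for f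
  proof -
    have "W - C = Y" unfolding C_def Y_def by auto
    thus ?thesis using cnt_split[of W C f] finW unfolding C_def by simp
  qed
  have ev: "{f. cnt W f < cnt W' f} = {f. cnt Y f < cnt X f}" using eqW eqW' by auto
  have P: "measure_pmf.prob (approval_pmf m p) {A. card (A \<inter> W) < card (A \<inter> W')}
        = measure_pmf.prob (Bp p {..<m}) {f. cnt Y f < cnt X f}"
    using approval_prob[OF Wm W'(1)] ev by simp
  have l0: "0 < card W'" using finW W' by (simp add: card_gt_0_iff)
  show ?thesis
  proof (cases "X = {}")
    case True
    hence "{f. cnt Y f < cnt X f} = {}" by (auto simp: cnt_def)
    thus ?thesis using P l0 k by simp
  next
    case False
    define s where "s = card X"
    define t where "t = card Y"
    define c where "c = card C"
    have cC: "c \<le> card W'" "c \<le> k" unfolding c_def C_def using finW cW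
      by (auto intro: card_mono)
    have sX: "s = card W' - c" unfolding s_def c_def X_def C_def
    proof -
      have "W' - (W \<inter> W') = W' - W" by auto
      thus "card (W' - W) = card W' - card (W \<inter> W')"
        using card_Diff_subset[of "W \<inter> W'" W'] finW by auto
    qed
    have tY: "t = k - c" unfolding t_def c_def Y_def C_def
    proof -
      have "W - (W \<inter> W') = W - W'" by auto
      thus "card (W - W') = k - card (W \<inter> W')"
        using card_Diff_subset[of "W \<inter> W'" W] finW cW by auto
    qed
    have "finite X" unfolding X_def using finW by auto
    hence s1: "1 \<le> s" unfolding s_def using False
      by (simp add: Suc_leI card_gt_0_iff)
    have st: "s \<le> t" using sX tY W'(3) by simp
    have "measure_pmf.prob (Bp p {..<m}) {f. cnt Y f < cnt X f} \<le> 1 / real (Suc (t div s))"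
      unfolding s_def t_def
    proof (rule key)
      show "X \<union> Y \<subseteq> {..<m}" using Wm W' unfolding X_def Y_def by auto
      show "X \<inter> Y = {}" unfolding X_def Y_def by auto
      show "1 \<le> card X" "card X \<le> card Y" using s1 st s_def t_def by auto
      show "p x \<le> p y" if "x \<in> X" "y \<in> Y" for x y
        using top[of y x] that W' unfolding X_def Y_def by auto
      show "0 \<le> p i \<and> p i \<le> 1" if "i \<in> {..<m}" for i using p[of i] that by auto
    qed simp
    also have "\<dots> < real s / real t"
    proof -
      have "t < s * Suc (t div s)"
      proof -
        have e: "t div s * s + t mod s = t" by (rule div_mult_mod_eq)
        have "t mod s < s" using s1 by simp
        moreover have "s * Suc (t div s) = t div s * s + s" by simp
        ultimately show ?thesis using e by linarith
      qed
      hence "real t < real s * real (Suc (t div s))" by (metis of_nat_less_iff of_nat_mult)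
      moreover have "0 < real t" using s1 st by simp
      ultimately show ?thesis by (simp add: field_simps)
    qed
    also have "\<dots> \<le> real (card W') / real k"
    proof -
      have "real s * real k \<le> real (card W') * real t"
      proof -
        have hs: "real s = real (card W') - real c" and ht: "real k = real c + real t"
          using sX tY cC by auto
        have "real c * real (card W') \<le> real c * (real c + real t)" using W'(3) ht
          by (intro mult_left_mono) auto
        moreover have "(real (card W') - real c) * (real c + real t) =
            real (card W') * real t - (real c * (real c + real t) - real c * real (card W'))"
          by (simp add: algebra_simps)
        ultimately show ?thesis unfolding hs ht by (simp add: mult.commute)
      qed
      moreover have "0 < real t" using s1 st by simp
      ultimately show ?thesis using k by (simp add: field_simps)
    qed
    finally show ?thesis using P by simp
  qed
qed

lemma profile_count:
  "map_pmf (\<lambda>P. card {j\<in>{..<n}. Q (P j)}) (profile_pmf n m p) =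
   binomial_pmf n (measure_pmf.prob (approval_pmf m p) {A. Q A})"
proof -
  define D where "D = approval_pmf m p"
  define q where "q = measure_pmf.prob D {A. Q A}"
  have q01: "0 \<le> q" "q \<le> 1" unfolding q_def by auto
  have bern: "map_pmf Q D = bernoulli_pmf q"
  proof (rule pmf_eqI)
    fix b :: bool
    show "pmf (map_pmf Q D) b = pmf (bernoulli_pmf q) b"
    proof (cases b)
      case True
      have "Q -` {True} = {A. Q A}" by auto
      thus ?thesis using True q01 by (simp add: pmf_map q_def)
    next
      case False
      have "Q -` {False} = UNIV - {A. Q A}" by auto
      moreover have "measure_pmf.prob D (UNIV - {A. Q A}) = 1 - q"
        using measure_pmf.prob_compl[of "{A. Q A}" D] unfolding q_def by simp
      ultimately show ?thesis using False q01 by (simp add: pmf_map)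
    qed
  qed
  have "map_pmf (\<lambda>P. card {j\<in>{..<n}. Q (P j)}) (profile_pmf n m p) =
     map_pmf (\<lambda>f. card {j\<in>{..<n}. f j}) (map_pmf (\<lambda>h. Q \<circ> h) (Pi_pmf {..<n} {} (\<lambda>_. D)))"
    unfolding profile_pmf_def D_def by (simp add: pmf.map_comp o_def)
  also have "map_pmf (\<lambda>h. Q \<circ> h) (Pi_pmf {..<n} {} (\<lambda>_. D)) = Pi_pmf {..<n} (Q {}) (\<lambda>_. map_pmf Q D)"
    by (rule Pi_pmf_map[symmetric]) auto
  also have "\<dots> = Pi_pmf {..<n} (Q {}) (\<lambda>_. bernoulli_pmf q)" by (simp add: bern)
  also have "map_pmf (\<lambda>f. card {j\<in>{..<n}. f j}) \<dots> = binomial_pmf n q"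
    by (rule binomial_pmf_altdef'[symmetric]) (use q01 in auto)
  finally show ?thesis unfolding q_def D_def .
qed


lemma bad_subset:
  assumes n: "0 < n" and k: "0 < k"
  shows "UNIV - {P. \<forall>W\<in>top_k m k p. in_core m k n P W} \<subseteq>
    (\<Union>pr\<in>top_k m k p \<times> {W'. W' \<subseteq> {..<m} \<and> W' \<noteq> {} \<and> card W' \<le> k}.
       {P. real (card (snd pr)) / real k \<le>
           real (card {j\<in>{..<n}. card (P j \<inter> fst pr) < card (P j \<inter> snd pr)}) / real n})"
proof
  fix P assume "P \<in> UNIV - {P. \<forall>W\<in>top_k m k p. in_core m k n P W}"
  then obtain W where W: "W \<in> top_k m k p" and nc: "\<not> in_core m k n P W" by auto
  have Wm: "W \<subseteq> {..<m}" "card W = k" using W unfolding top_k_def by auto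
  from nc Wm obtain N' W' where N': "N' \<subseteq> {..<n}" "N' \<noteq> {}" and W': "W' \<subseteq> {..<m}"
    and rat: "real (card W') / real k \<le> real (card N') / real n"
    and dev: "\<forall>j\<in>N'. \<not> card (P j \<inter> W') \<le> card (P j \<inter> W)"
    unfolding in_core_def by blast
  obtain j where j: "j \<in> N'" using N' by auto
  have "W' \<noteq> {}" using dev j by auto
  have cN: "card N' \<le> n" using N' card_mono[of "{..<n}" N'] by auto
  hence "real (card N') / real n \<le> 1" using n by simp
  hence "real (card W') / real k \<le> 1" using rat by linarith
  hence "card W' \<le> k" using k by (simp add: divide_le_eq)
  define D where "D = {j\<in>{..<n}. card (P j \<inter> W) < card (P j \<inter> W')}"
  have "N' \<subseteq> D" using N' dev unfolding D_def by auto
  hence "card N' \<le> card D" unfolding D_def by (intro card_mono) auto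
  hence "real (card N') / real n \<le> real (card D) / real n" by (simp add: divide_right_mono)
  with rat have "real (card W') / real k \<le> real (card D) / real n" by linarith
  thus "P \<in> (\<Union>pr\<in>top_k m k p \<times> {W'. W' \<subseteq> {..<m} \<and> W' \<noteq> {} \<and> card W' \<le> k}.
       {P. real (card (snd pr)) / real k \<le>
           real (card {j\<in>{..<n}. card (P j \<inter> fst pr) < card (P j \<inter> snd pr)}) / real n})"
    using W W' \<open>W' \<noteq> {}\<close> \<open>card W' \<le> k\<close> unfolding D_def by (intro UN_I[of "(W, W')"]) auto
qed

lemma bad_prob:
  assumes n: "0 < n" and k: "0 < k" and W: "W \<in> top_k m k p"
    and W': "W' \<subseteq> {..<m}" "W' \<noteq> {}" "card W' \<le> k"
    and p: "\<And>i. i < m \<Longrightarrow> 0 < p i \<and> p i < 1"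
    and d: "0 < d" "d \<le> real (card W') / real k -
        measure_pmf.prob (approval_pmf m p) {A. card (A \<inter> W) < card (A \<inter> W')}"
  shows "measure_pmf.prob (profile_pmf n m p) {P. real (card W') / real k \<le>
           real (card {j\<in>{..<n}. card (P j \<inter> W) < card (P j \<inter> W')}) / real n}
         \<le> exp (- 2 * real n * d\<^sup>2)"
proof -
  define q where "q = measure_pmf.prob (approval_pmf m p) {A. card (A \<inter> W) < card (A \<inter> W')}"
  define g where "g = real (card W') / real k - q"
  have "measure_pmf.prob (profile_pmf n m p) {P. real (card W') / real k \<le>
           real (card {j\<in>{..<n}. card (P j \<inter> W) < card (P j \<inter> W')}) / real n}
     = measure_pmf.prob (map_pmf (\<lambda>P. card {j\<in>{..<n}. card (P j \<inter> W) < card (P j \<inter> W')})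
          (profile_pmf n m p)) {x. q + g \<le> real x / real n}"
    unfolding g_def by simp
  also have "\<dots> = measure_pmf.prob (binomial_pmf n q) {x. q + g \<le> real x / real n}"
  proof -
    have eq: "map_pmf (\<lambda>P. card {j\<in>{..<n}. card (P j \<inter> W) < card (P j \<inter> W')}) (profile_pmf n m p)
       = binomial_pmf n q"
      using profile_count[of n "\<lambda>A. card (A \<inter> W) < card (A \<inter> W')" m p] unfolding q_def by simp
    show ?thesis unfolding eq ..
  qed
  also have "\<dots> \<le> exp (real_of_int (- 2 * int n) * g\<^sup>2)"
    using n d unfolding g_def q_def
    by (intro binomial_distribution.prob_ge') (auto simp: binomial_distribution_def)
  also have "\<dots> \<le> exp (- 2 * real n * d\<^sup>2)"
  proof -
    have "d\<^sup>2 \<le> g\<^sup>2" using d unfolding g_def q_def by (intro power_mono) auto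
    hence "- 2 * real n * g\<^sup>2 \<le> - 2 * real n * d\<^sup>2" by (simp add: mult_left_mono)
    thus ?thesis by simp
  qed
  finally show ?thesis .
qed


theorem theorem16:
  fixes m k :: nat and p :: "nat \<Rightarrow> real"
  assumes "0 < k" and "k < m"
    and "\<And>i. i < m \<Longrightarrow> 0 < p i \<and> p i < 1"
  shows "\<exists>c>0. \<forall>\<^sub>F n in at_top.
           1 - measure_pmf.prob (profile_pmf n m p)
                 {P. \<forall>W\<in>top_k m k p. in_core m k n P W} \<le> exp (- c * real n)"
proof -
  define T where "T = top_k m k p"
  define V where "V = {W'. W' \<subseteq> {..<m} \<and> W' \<noteq> {} \<and> card W' \<le> k}"
  define Pairs where "Pairs = T \<times> V"
  define gap where "gap = (\<lambda>pr. real (card (snd pr)) / real k -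
      measure_pmf.prob (approval_pmf m p) {A. card (A \<inter> fst pr) < card (A \<inter> snd pr)})"
  have "T \<subseteq> Pow {..<m}" unfolding T_def top_k_def by auto
  moreover have "V \<subseteq> Pow {..<m}" unfolding V_def by auto
  ultimately have finP: "finite Pairs" unfolding Pairs_def
    by (meson finite_Pow_iff finite_SigmaI finite_lessThan finite_subset)
  have gpos: "0 < gap pr" if "pr \<in> Pairs" for pr
    using that top_gap[OF assms(1) _ _ _ _ assms(3)] unfolding Pairs_def T_def V_def gap_def
    by (cases pr) auto
  define d where "d = Min (insert 1 (gap ` Pairs))"
  have dpos: "0 < d" unfolding d_def using finP gpos by (subst Min_gr_iff) auto
  have dle: "d \<le> gap pr" if "pr \<in> Pairs" for pr unfolding d_def using finP that by (intro Min_le) auto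
  define N where "N = card Pairs"
  have bound: "1 - measure_pmf.prob (profile_pmf n m p) {P. \<forall>W\<in>top_k m k p. in_core m k n P W}
      \<le> real N * exp (- 2 * real n * d\<^sup>2)" if n: "0 < n" for n
  proof -
    let ?M = "profile_pmf n m p"
    let ?G = "{P. \<forall>W\<in>top_k m k p. in_core m k n P W}"
    define Bad where "Bad = (\<lambda>pr :: nat set \<times> nat set. {P. real (card (snd pr)) / real k \<le>
           real (card {j\<in>{..<n}. card (P j \<inter> fst pr) < card (P j \<inter> snd pr)}) / real n})"
    have "1 - measure_pmf.prob ?M ?G = measure_pmf.prob ?M (UNIV - ?G)"
      using measure_pmf.prob_compl[of ?G ?M] by simp
    also have "\<dots> \<le> measure_pmf.prob ?M (\<Union>pr\<in>Pairs. Bad pr)"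
      using bad_subset[OF n assms(1), of m p] unfolding Pairs_def T_def V_def Bad_def
      by (intro measure_pmf.finite_measure_mono) auto
    also have "\<dots> \<le> (\<Sum>pr\<in>Pairs. measure_pmf.prob ?M (Bad pr))"
      using finP by (intro measure_pmf.finite_measure_subadditive_finite) auto
    also have "\<dots> \<le> (\<Sum>pr\<in>Pairs. exp (- 2 * real n * d\<^sup>2))"
    proof (rule sum_mono)
      fix pr assume pr: "pr \<in> Pairs"
      obtain W W' where pr': "pr = (W, W')" by (cases pr)
      show "measure_pmf.prob ?M (Bad pr) \<le> exp (- 2 * real n * d\<^sup>2)"
        unfolding Bad_def pr' fst_conv snd_conv
        using pr dle[OF pr] dpos unfolding pr' Pairs_def T_def V_def gap_def
        by (intro bad_prob[OF n assms(1) _ _ _ _ assms(3)]) auto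
    qed
    also have "\<dots> = real N * exp (- 2 * real n * d\<^sup>2)" unfolding N_def by simp
    finally show ?thesis .
  qed
  show ?thesis
  proof (intro exI[of _ "d\<^sup>2"] conjI)
    show "0 < d\<^sup>2" using dpos by simp
    show "\<forall>\<^sub>F n in at_top. 1 - measure_pmf.prob (profile_pmf n m p) {P. \<forall>W\<in>top_k m k p. in_core m k n P W}
        \<le> exp (- d\<^sup>2 * real n)"
      using eventually_ge_at_top[of "max 1 (nat \<lceil>real N / d\<^sup>2\<rceil>)"]
    proof eventually_elim
      case (elim n)
      have n: "0 < n" using elim by simp
      have "real N / d\<^sup>2 \<le> real n" using elim by linarith
      hence Nle: "real N \<le> real n * d\<^sup>2" using dpos by (simp add: divide_le_eq)
      have "real n * d\<^sup>2 \<le> exp (real n * d\<^sup>2)"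
        using exp_ge_add_one_self[of "real n * d\<^sup>2"] by linarith
      hence "real N \<le> exp (real n * d\<^sup>2)" using Nle by linarith
      hence "real N * exp (- 2 * real n * d\<^sup>2) \<le> exp (real n * d\<^sup>2) * exp (- 2 * real n * d\<^sup>2)"
        by (intro mult_right_mono) auto
      also have "\<dots> = exp (- d\<^sup>2 * real n)" by (simp add: exp_add[symmetric] algebra_simps)
      finally show ?case using bound[OF n] by linarith
    qed
  qed
qed

end
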